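(* For a pseudocompact (Tychonoff) space $X$, $X$ is a $C$-space if and only if $X$ is a finite $C$-space.
   Context: A set is functionally open if it is a cozero set. $X$ is a $C$-space if every sequence $\{\omega_n\}$ of locally finite covers of $X$ by functionally open sets has a $C$-refinement $\{\gamma_n\}$ (each $\gamma_n$ a disjoint family of open sets refining $\omega_n$, with $\bigcup_n\gamma_n$ covering $X$) such that $\bigcup_n\gamma_n$ is a locally finite cover of $X$ by functionally open sets. $X$ is a finite $C$-space if for every sequence $\{\omega_n\}$ of finite covers of $X$ by functionally open sets there exist $k$ and finite families $\gamma_1,\dots,\gamma_k$ of pairwise disjoint functionally open sets such that each $\gamma_n$ refines $\omega_n$ and $\bigcup_{n=1}^k\gamma_n$ covers $X$. *)

theory Defs
  imports "HOL-Analysis.Analysis"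
begin

definition tychonoff_space :: "'a topology \<Rightarrow> bool" where
  "tychonoff_space X \<longleftrightarrow> completely_regular_space X \<and> Hausdorff_space X"

definition pseudocompact_space :: "'a topology \<Rightarrow> bool" where
  "pseudocompact_space X \<longleftrightarrow>
     (\<forall>f. continuous_map X euclideanreal f \<longrightarrow> (\<exists>B. \<forall>x\<in>topspace X. \<bar>f x\<bar> \<le> B))"

definition functionally_open :: "'a topology \<Rightarrow> 'a set \<Rightarrow> bool" where
  "functionally_open X U \<longleftrightarrow>
     (\<exists>f. continuous_map X euclideanreal f \<and> U = {x \<in> topspace X. f x \<noteq> 0})"

definition covers :: "'a topology \<Rightarrow> 'a set set \<Rightarrow> bool" where
  "covers X \<U> \<longleftrightarrow> \<Union>\<U> = topspace X"

definition refines :: "'a set set \<Rightarrow> 'a set set \<Rightarrow> bool" where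
  "refines \<V> \<U> \<longleftrightarrow> (\<forall>V\<in>\<V>. \<exists>U\<in>\<U>. V \<subseteq> U)"

definition C_space :: "'a topology \<Rightarrow> bool" where
  "C_space X \<longleftrightarrow>
     (\<forall>\<omega> :: nat \<Rightarrow> 'a set set.
        (\<forall>n. covers X (\<omega> n) \<and> locally_finite_in X (\<omega> n) \<and>
             (\<forall>U\<in>\<omega> n. functionally_open X U))
        \<longrightarrow> (\<exists>\<gamma> :: nat \<Rightarrow> 'a set set.
               (\<forall>n. pairwise disjnt (\<gamma> n) \<and> (\<forall>V\<in>\<gamma> n. openin X V) \<and>
                    refines (\<gamma> n) (\<omega> n)) \<and>
               covers X (\<Union>n. \<gamma> n) \<and>
               locally_finite_in X (\<Union>n. \<gamma> n) \<and>
               (\<forall>V\<in>(\<Union>n. \<gamma> n). functionally_open X V)))"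

definition finite_C_space :: "'a topology \<Rightarrow> bool" where
  "finite_C_space X \<longleftrightarrow>
     (\<forall>\<omega> :: nat \<Rightarrow> 'a set set.
        (\<forall>n. finite (\<omega> n) \<and> covers X (\<omega> n) \<and> (\<forall>U\<in>\<omega> n. functionally_open X U))
        \<longrightarrow> (\<exists>k::nat. \<exists>\<gamma> :: nat \<Rightarrow> 'a set set.
               (\<forall>n\<in>{1..k}. finite (\<gamma> n) \<and> pairwise disjnt (\<gamma> n) \<and>
                    (\<forall>V\<in>\<gamma> n. functionally_open X V) \<and> refines (\<gamma> n) (\<omega> n)) \<and>
               covers X (\<Union>n\<in>{1..k}. \<gamma> n)))"

end

theory Submission imports Defs begin

lemma fo_openin: "functionally_open X U \<Longrightarrow> openin X U"
  unfolding functionally_open_def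
proof (elim exE conjE)
  fix g assume g: "continuous_map X euclideanreal g" and U: "U = {x \<in> topspace X. g x \<noteq> 0}"
  have "openin X {x \<in> topspace X. g x \<in> -{0}}"
    by (rule openin_continuous_map_preimage[OF g]) auto
  then show "openin X U" using U by simp
qed

lemma fo_sub: "functionally_open X U \<Longrightarrow> U \<subseteq> topspace X"
  unfolding functionally_open_def by auto

lemma pseudo_lf_finite:
  assumes ps: "pseudocompact_space X" and lf: "locally_finite_in X F"
    and fo: "\<forall>U\<in>F. functionally_open X U"
  shows "finite {U\<in>F. U \<noteq> {}}"
proof (rule ccontr)
  assume inf: "infinite {U\<in>F. U \<noteq> {}}"
  have "\<exists>f::nat \<Rightarrow> 'a set. inj f \<and> range f \<subseteq> {U\<in>F. U \<noteq> {}}"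
    using inf by (simp only: infinite_iff_countable_subset)
  then obtain U :: "nat \<Rightarrow> 'a set" where inj: "inj U" and rng: "range U \<subseteq> {U\<in>F. U \<noteq> {}}"
    by blast
  have UF: "U n \<in> F" for n using rng by blast
  have Une: "U n \<noteq> {}" for n using rng by blast
  have "\<forall>n. \<exists>g. continuous_map X euclideanreal g \<and> U n = {x \<in> topspace X. g x \<noteq> 0}"
  proof
    fix n
    have "functionally_open X (U n)" using fo UF by blast
    then show "\<exists>g. continuous_map X euclideanreal g \<and> U n = {x \<in> topspace X. g x \<noteq> 0}"
      unfolding functionally_open_def .
  qed
  then obtain g where gg: "\<forall>n. continuous_map X euclideanreal (g n) \<and> U n = {x \<in> topspace X. g n x \<noteq> 0}"
    by (rule choice[THEN exE])
  have g: "\<And>n. continuous_map X euclideanreal (g n)" using gg by blast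
  have gU: "\<And>n. U n = {x \<in> topspace X. g n x \<noteq> 0}" using gg by blast
  have "\<forall>n. \<exists>x. x \<in> U n" using Une by blast
  then obtain x where xx: "\<forall>n. x n \<in> U n" by (rule choice[THEN exE])
  have xU: "\<And>n. x n \<in> U n" using xx by blast
  define h where "h n y = \<bar>g n y\<bar> * (1 / \<bar>g n (x n)\<bar>)" for n y
  have hc: "continuous_map X euclideanreal (h n)" for n
  proof -
    have "continuous_map X euclideanreal (\<lambda>y. \<bar>g n y\<bar>)" by (rule continuous_map_real_abs[OF g])
    then have "continuous_map X euclideanreal (\<lambda>y. \<bar>g n y\<bar> * (1 / \<bar>g n (x n)\<bar>))"
      by (rule continuous_map_real_mult_right)
    then show ?thesis unfolding h_def[abs_def] .
  qed
  have h0: "h n y = 0" if "y \<in> topspace X" "y \<notin> U n" for n y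
  proof -
    have "g n y = 0" using that gU[of n] by blast
    then show ?thesis by (simp add: h_def)
  qed
  have hnn: "h n y \<ge> 0" for n y by (simp add: h_def)
  have h1: "h n (x n) = 1" for n
  proof -
    have "g n (x n) \<noteq> 0" using xU[of n] gU[of n] by blast
    then show ?thesis by (simp add: h_def)
  qed
  define S where "S V = {n. U n \<inter> V \<noteq> {}}" for V
  have lfU: "\<exists>V. openin X V \<and> y \<in> V \<and> finite (S V)" if yt: "y \<in> topspace X" for y
  proof -
    obtain V where V: "openin X V" "y \<in> V" "finite {W \<in> F. W \<inter> V \<noteq> {}}"
    proof -
      have "\<forall>x \<in> topspace X. \<exists>V. openin X V \<and> x \<in> V \<and> finite {U \<in> F. U \<inter> V \<noteq> {}}"
        using lf unfolding locally_finite_in_def by (rule conjunct2)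
      then have "\<exists>V. openin X V \<and> y \<in> V \<and> finite {W \<in> F. W \<inter> V \<noteq> {}}"
        using yt by (rule bspec)
      then show ?thesis using that by blast
    qed
    have "S V \<subseteq> U -` {W \<in> F. W \<inter> V \<noteq> {}}" using UF unfolding S_def by blast
    moreover have "finite (U -` {W \<in> F. W \<inter> V \<noteq> {}})"
      using V(3) inj by (rule finite_vimageI)
    ultimately have "finite (S V)" by (rule finite_subset)
    then show ?thesis using V(1,2) by blast
  qed
  define Fn where "Fn y = (\<Sum>m\<in>{m. y \<in> U m}. real m * h m y)" for y
  define I where "I = {V. openin X V \<and> finite (S V)}"
  define f where "f V y = (\<Sum>m\<in>S V. real m * h m y)" for V y
  have fF: "f V y = Fn y" if "V \<in> I" "y \<in> V" "y \<in> topspace X" for V y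
  proof -
    have sub: "{m. y \<in> U m} \<subseteq> S V" using that by (auto simp: S_def)
    have "f V y = (\<Sum>m\<in>{m. y \<in> U m}. real m * h m y)"
      unfolding f_def
      by (rule sum.mono_neutral_right) (use that sub h0 in \<open>auto simp: I_def\<close>)
    then show ?thesis by (simp add: Fn_def)
  qed
  have cont: "continuous_map X euclideanreal Fn"
  proof (rule pasting_lemma[where I=I and T="\<lambda>V. V" and f=f])
    show "openin X V" if "V \<in> I" for V using that by (simp add: I_def)
    show "continuous_map (subtopology X V) euclideanreal (f V)" if "V \<in> I" for V
      unfolding f_def using that
      by (intro continuous_map_sum continuous_map_real_mult_left continuous_map_from_subtopology hc)
         (auto simp: I_def)
    show "f i y = f j y" if "i \<in> I" "j \<in> I" "y \<in> topspace X \<inter> i \<inter> j" for i j y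
      using that fF by auto
    show "\<exists>j. j \<in> I \<and> y \<in> j \<and> Fn y = f j y" if "y \<in> topspace X" for y
      using lfU[OF that] fF that unfolding I_def by fastforce
  qed
  then obtain B where B: "\<And>y. y \<in> topspace X \<Longrightarrow> \<bar>Fn y\<bar> \<le> B"
    using ps unfolding pseudocompact_space_def by blast
  define n where "n = Suc (nat \<lceil>B\<rceil>)"
  have xt: "x n \<in> topspace X" using xU[of n] gU[of n] by auto
  have fin: "finite {m. x n \<in> U m}"
  proof -
    obtain V where "openin X V" "x n \<in> V" "finite (S V)" using lfU[OF xt] by blast
    moreover have "{m. x n \<in> U m} \<subseteq> S V" using \<open>x n \<in> V\<close> by (auto simp: S_def)
    ultimately show ?thesis using finite_subset by blast
  qed
  have "real n * h n (x n) \<le> Fn (x n)"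
    unfolding Fn_def
    by (rule member_le_sum) (use fin xU hnn in auto)
  then have "real n \<le> Fn (x n)" by (simp add: h1)
  moreover have "Fn (x n) \<le> B" using B[OF xt] by simp
  moreover have "B < real n" unfolding n_def by linarith
  ultimately show False by linarith
qed

lemma C_imp_fin:
  assumes ps: "pseudocompact_space X" and C: "C_space X"
  shows "finite_C_space X"
  unfolding finite_C_space_def
proof (intro allI impI)
  fix \<omega> :: "nat \<Rightarrow> 'a set set"
  assume H: "\<forall>n. finite (\<omega> n) \<and> covers X (\<omega> n) \<and> (\<forall>U\<in>\<omega> n. functionally_open X U)"
  define \<omega>' where "\<omega>' n = \<omega> (Suc n)" for n
  have Hw: "\<forall>n. covers X (\<omega>' n) \<and> locally_finite_in X (\<omega>' n) \<and> (\<forall>U\<in>\<omega>' n. functionally_open X U)"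
  proof
    fix n
    have h: "finite (\<omega> (Suc n))" "covers X (\<omega> (Suc n))" "\<forall>U\<in>\<omega> (Suc n). functionally_open X U"
      using H by blast+
    have "locally_finite_in X (\<omega> (Suc n))"
      by (rule finite_imp_locally_finite_in[OF h(1)]) (use h(2) in \<open>simp add: covers_def\<close>)
    then show "covers X (\<omega>' n) \<and> locally_finite_in X (\<omega>' n) \<and> (\<forall>U\<in>\<omega>' n. functionally_open X U)"
      using h unfolding \<omega>'_def by blast
  qed
  have "\<exists>\<gamma> :: nat \<Rightarrow> 'a set set.
               (\<forall>n. pairwise disjnt (\<gamma> n) \<and> (\<forall>V\<in>\<gamma> n. openin X V) \<and>
                    refines (\<gamma> n) (\<omega>' n)) \<and>
               covers X (\<Union>n. \<gamma> n) \<and>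
               locally_finite_in X (\<Union>n. \<gamma> n) \<and>
               (\<forall>V\<in>(\<Union>n. \<gamma> n). functionally_open X V)"
    using C[unfolded C_space_def, THEN spec[of _ \<omega>'], THEN mp, OF Hw] .
  then obtain \<gamma> where G: "(\<forall>n. pairwise disjnt (\<gamma> n) \<and> (\<forall>V\<in>\<gamma> n. openin X V) \<and>
                    refines (\<gamma> n) (\<omega>' n)) \<and>
               covers X (\<Union>n. \<gamma> n) \<and>
               locally_finite_in X (\<Union>n. \<gamma> n) \<and>
               (\<forall>V\<in>(\<Union>n. \<gamma> n). functionally_open X V)"
    by (rule exE)
  have g1: "\<forall>n. pairwise disjnt (\<gamma> n) \<and> (\<forall>V\<in>\<gamma> n. openin X V) \<and> refines (\<gamma> n) (\<omega>' n)"
    using G by (rule conjunct1)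
  have g2: "covers X (\<Union>n. \<gamma> n)" using G by blast
  have g3: "locally_finite_in X (\<Union>n. \<gamma> n)" using G by blast
  have g4: "\<forall>V\<in>(\<Union>n. \<gamma> n). functionally_open X V" using G by blast
  define A where "A = {V \<in> (\<Union>n. \<gamma> n). V \<noteq> {}}"
  have finA: "finite A" unfolding A_def using pseudo_lf_finite[OF ps g3 g4] .
  have "\<forall>V\<in>A. \<exists>n. V \<in> \<gamma> n" unfolding A_def by blast
  then obtain idx where idx0: "\<forall>V\<in>A. V \<in> \<gamma> (idx V)" by (rule bchoice[THEN exE])
  have idx: "\<And>V. V \<in> A \<Longrightarrow> V \<in> \<gamma> (idx V)" using idx0 by blast
  define k where "k = Suc (Max (idx ` A))"
  have idxk: "Suc (idx V) \<le> k" if "V \<in> A" for V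
    using that finA unfolding k_def by (simp add: Max_ge)
  define \<gamma>' where "\<gamma>' n = {V \<in> \<gamma> (n - 1). V \<noteq> {}}" for n
  show "\<exists>k \<gamma>. (\<forall>n\<in>{1..k}. finite (\<gamma> n) \<and> pairwise disjnt (\<gamma> n) \<and>
                    (\<forall>V\<in>\<gamma> n. functionally_open X V) \<and> refines (\<gamma> n) (\<omega> n)) \<and>
               covers X (\<Union>n\<in>{1..k}. \<gamma> n)"
  proof (intro exI conjI)
    show "\<forall>n\<in>{1..k}. finite (\<gamma>' n) \<and> pairwise disjnt (\<gamma>' n) \<and>
                    (\<forall>V\<in>\<gamma>' n. functionally_open X V) \<and> refines (\<gamma>' n) (\<omega> n)"
    proof
    fix n :: nat assume n: "n \<in> {1..k}"
    have c1: "finite (\<gamma>' n)"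
      by (rule finite_subset[OF _ finA]) (auto simp: \<gamma>'_def A_def)
    have pd: "pairwise disjnt (\<gamma> (n - 1))" using g1 by blast
    have c2: "pairwise disjnt (\<gamma>' n)"
      by (rule pairwise_subset[OF pd]) (simp add: \<gamma>'_def)
    have c3: "\<forall>V\<in>\<gamma>' n. functionally_open X V" using g4 unfolding \<gamma>'_def by blast
    have "Suc (n - 1) = n" using n by auto
    then have ww: "\<omega>' (n - 1) = \<omega> n" unfolding \<omega>'_def by simp
    have "refines (\<gamma> (n - 1)) (\<omega>' (n - 1))" using g1 by blast
    then have c4: "refines (\<gamma>' n) (\<omega> n)"
      unfolding ww refines_def \<gamma>'_def by blast
    show "finite (\<gamma>' n) \<and> pairwise disjnt (\<gamma>' n) \<and>
                    (\<forall>V\<in>\<gamma>' n. functionally_open X V) \<and> refines (\<gamma>' n) (\<omega> n)"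
      by (rule conjI[OF c1 conjI[OF c2 conjI[OF c3 c4]]])
    qed
  next
    show "covers X (\<Union>n\<in>{1..k}. \<gamma>' n)"
      unfolding covers_def
    proof
      show "\<Union>(\<Union>n\<in>{1..k}. \<gamma>' n) \<subseteq> topspace X"
        using g4 fo_sub unfolding \<gamma>'_def by blast
      show "topspace X \<subseteq> \<Union>(\<Union>n\<in>{1..k}. \<gamma>' n)"
      proof
        fix y assume y: "y \<in> topspace X"
        then obtain V where V: "V \<in> (\<Union>n. \<gamma> n)" "y \<in> V" using g2 unfolding covers_def by blast
        then have VA: "V \<in> A" unfolding A_def by blast
        have "V \<in> \<gamma>' (Suc (idx V))" using idx[OF VA] V unfolding \<gamma>'_def by auto
        moreover have "Suc (idx V) \<in> {1..k}" using idxk[OF VA] by auto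
        ultimately show "y \<in> \<Union>(\<Union>n\<in>{1..k}. \<gamma>' n)" using V by blast
      qed
    qed
  qed
qed

lemma fin_imp_C:
  assumes ps: "pseudocompact_space X" and C: "finite_C_space X"
  shows "C_space X"
  unfolding C_space_def
proof (intro allI impI)
  fix \<omega> :: "nat \<Rightarrow> 'a set set"
  assume H: "\<forall>n. covers X (\<omega> n) \<and> locally_finite_in X (\<omega> n) \<and> (\<forall>U\<in>\<omega> n. functionally_open X U)"
  define \<omega>' where "\<omega>' n = {U \<in> \<omega> n. U \<noteq> {}}" for n
  have "\<forall>n. finite (\<omega>' n) \<and> covers X (\<omega>' n) \<and> (\<forall>U\<in>\<omega>' n. functionally_open X U)"
  proof
    fix n
    show "finite (\<omega>' n) \<and> covers X (\<omega>' n) \<and> (\<forall>U\<in>\<omega>' n. functionally_open X U)"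
    proof (intro conjI)
      show "finite (\<omega>' n)" using H pseudo_lf_finite[OF ps, of "\<omega> n"] unfolding \<omega>'_def by auto
      show "\<forall>U\<in>\<omega>' n. functionally_open X U" using H unfolding \<omega>'_def by auto
      have "\<Union>(\<omega>' n) = \<Union>(\<omega> n)" unfolding \<omega>'_def by blast
      then show "covers X (\<omega>' n)" using H unfolding covers_def by simp
    qed
  qed
  then obtain k \<gamma> where g1: "\<forall>n\<in>{1..k}. finite (\<gamma> n) \<and> pairwise disjnt (\<gamma> n) \<and>
                    (\<forall>V\<in>\<gamma> n. functionally_open X V) \<and> refines (\<gamma> n) (\<omega>' n)"
    and g2: "covers X (\<Union>n\<in>{1..k}. \<gamma> n)"
    using C unfolding finite_C_space_def by blast
  define \<gamma>' where "\<gamma>' n = (if n \<in> {1..k} then \<gamma> n else {})" for n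
  have un: "(\<Union>n. \<gamma>' n) = (\<Union>n\<in>{1..k}. \<gamma> n)" unfolding \<gamma>'_def by auto
  show "\<exists>\<gamma>. (\<forall>n. pairwise disjnt (\<gamma> n) \<and> (\<forall>V\<in>\<gamma> n. openin X V) \<and> refines (\<gamma> n) (\<omega> n)) \<and>
               covers X (\<Union>n. \<gamma> n) \<and> locally_finite_in X (\<Union>n. \<gamma> n) \<and>
               (\<forall>V\<in>(\<Union>n. \<gamma> n). functionally_open X V)"
  proof (intro exI conjI allI)
    fix n
    show "pairwise disjnt (\<gamma>' n)"
    proof (cases "n \<in> {1..k}")
      case True
      then show ?thesis using g1 unfolding \<gamma>'_def by simp
    next
      case False
      then have "\<gamma>' n = {}" unfolding \<gamma>'_def by (rule if_not_P)
      then show ?thesis by simp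
    qed
    show "\<forall>V\<in>\<gamma>' n. openin X V"
    proof (cases "n \<in> {1..k}")
      case True
      then have "\<gamma>' n = \<gamma> n" unfolding \<gamma>'_def by (rule if_P)
      moreover have "\<forall>V\<in>\<gamma> n. functionally_open X V" using g1 True by blast
      ultimately show ?thesis using fo_openin by blast
    next
      case False
      then have "\<gamma>' n = {}" unfolding \<gamma>'_def by (rule if_not_P)
      then show ?thesis by blast
    qed
    show "refines (\<gamma>' n) (\<omega> n)"
    proof (cases "n \<in> {1..k}")
      case True
      then have "refines (\<gamma> n) (\<omega>' n)" using g1 by blast
      moreover have "\<gamma>' n = \<gamma> n" unfolding \<gamma>'_def using True by (rule if_P)
      ultimately show ?thesis unfolding \<omega>'_def refines_def by blast
    next
      case False
      then have "\<gamma>' n = {}" unfolding \<gamma>'_def by (rule if_not_P)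
      then show ?thesis unfolding refines_def by blast
    qed
  next
    show "covers X (\<Union>n. \<gamma>' n)" unfolding un by (rule g2)
    show "\<forall>V\<in>(\<Union>n. \<gamma>' n). functionally_open X V" unfolding un using g1 by blast
    have fin: "finite (\<Union>n\<in>{1..k}. \<gamma> n)"
      using g1 by (intro finite_UN_I) auto
    have sub: "\<Union>(\<Union>n\<in>{1..k}. \<gamma> n) \<subseteq> topspace X" using g2 unfolding covers_def by simp
    show "locally_finite_in X (\<Union>n. \<gamma>' n)"
      unfolding un by (rule finite_imp_locally_finite_in[OF fin sub])
  qed
qed

theorem proposition2p1:
  fixes X :: "'a topology"
  assumes "tychonoff_space X" and "pseudocompact_space X"
  shows "C_space X \<longleftrightarrow> finite_C_space X"
  using C_imp_fin[OF assms(2)] fin_imp_C[OF assms(2)] by (rule iffI)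

end
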